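(* Let $\alpha$ be a proper action of a locally compact group $G$ on a commutative $C^*$-algebra $A=C_\infty(M)$, $M$ a locally compact Hausdorff space (so $\alpha$ comes from an action on $M$ with $(\alpha_xf)(m)=f(\alpha_x^{-1}(m))$), and let $M/\alpha$ be the orbit space with its quotient topology, which is locally compact Hausdorff. Then for all $f,g\in\mathcal P_\alpha$ the element $\psi_\alpha(\bar f g)\in C_b(M)$ is $\alpha$-invariant and, viewed as a function on $M/\alpha$, belongs to $C_\infty(M/\alpha)$.
   Context: $G$ has a fixed left Haar measure. $\mathcal B$ is the set of $\lambda\in L^\infty(G)$ with compact support and $0\le\lambda\le 1$, directed pointwise; $p_\lambda(a)=\int_G\lambda(x)\alpha_x(a)\,dx$. An element $a\in A^+$ is $\alpha$-proper if $(p_\lambda(a))_{\lambda\in\mathcal B}$ converges in the strict topology of $M(A)=C_b(M)$; $\mathcal P_\alpha$ is the linear span of the $\alpha$-proper elements (a $*$-subalgebra of $A$), and $\alpha$ is proper if $\mathcal P_\alpha$ is dense. For $a\in\mathcal P_\alpha$, $\psi_\alpha(a)\in M(A)$ denotes the strict limit of $(p_\lambda(a))_{\lambda\in\mathcal B}$. *)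

theory Defs
  imports "HOL-Analysis.Analysis"
begin

definition C0_on :: "'a topology \<Rightarrow> ('a \<Rightarrow> complex) set" where
  "C0_on X = {f. continuous_map X euclidean f \<and>
      (\<forall>e>0. \<exists>K. compactin X K \<and> (\<forall>y\<in>topspace X - K. norm (f y) < e))}"

definition C0 :: "('m::topological_space \<Rightarrow> complex) set" where
  "C0 = C0_on euclidean"

definition Cb :: "('m::topological_space \<Rightarrow> complex) set" where
  "Cb = {h. continuous_on UNIV h \<and> (\<exists>B. \<forall>m. norm (h m) \<le> B)}"

text \<open>The group G is a type of class topological_group_add (group_add is NOT assumed
  commutative, + is the group law, 0 the unit, uminus the inverse).\<close>

definition left_haar_measure :: "'g::{topological_group_add,t2_space} measure \<Rightarrow> bool" where
  "left_haar_measure \<mu> \<longleftrightarrow>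
     sets \<mu> = sets borel \<and>
     (\<forall>E\<in>sets borel. \<forall>x. emeasure \<mu> ((\<lambda>y. x + y) ` E) = emeasure \<mu> E) \<and>
     (\<forall>K. compact K \<longrightarrow> emeasure \<mu> K < \<infinity>) \<and>
     (\<forall>U. open U \<and> U \<noteq> {} \<longrightarrow> emeasure \<mu> U > 0) \<and>
     (\<forall>E\<in>sets borel. emeasure \<mu> E = (INF U\<in>{U. open U \<and> E \<subseteq> U}. emeasure \<mu> U)) \<and>
     (\<forall>U. open U \<longrightarrow> emeasure \<mu> U = (SUP K\<in>{K. compact K \<and> K \<subseteq> U}. emeasure \<mu> K))"

definition continuous_action :: "('g::topological_group_add \<Rightarrow> 'm::topological_space \<Rightarrow> 'm) \<Rightarrow> bool" where
  "continuous_action act \<longleftrightarrow>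
     (\<forall>m. act 0 m = m) \<and> (\<forall>x y m. act (x + y) m = act x (act y m)) \<and>
     continuous_on UNIV (\<lambda>(x, m). act x m)"

definition alpha :: "('g::group_add \<Rightarrow> 'm \<Rightarrow> 'm) \<Rightarrow> 'g \<Rightarrow> ('m \<Rightarrow> complex) \<Rightarrow> ('m \<Rightarrow> complex)" where
  "alpha act x f = (\<lambda>m. f (act (- x) m))"

text \<open>The index set B: (representatives of) L-infinity functions with compact support and
  values in [0,1], directed by the pointwise order.\<close>

definition Bset :: "('g::topological_space \<Rightarrow> real) set" where
  "Bset = {l. l \<in> borel_measurable borel \<and> (\<forall>x. 0 \<le> l x \<and> l x \<le> 1) \<and>
              (\<exists>K. compact K \<and> (\<forall>x. x \<notin> K \<longrightarrow> l x = 0))}"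

text \<open>p_lambda(a) = integral of lambda(x) alpha_x(a) dx; the A-valued (Bochner) integral is
  evaluated pointwise at each m (evaluation at m is a bounded linear functional on A).\<close>

definition p_lam :: "'g::topological_group_add measure \<Rightarrow> ('g \<Rightarrow> 'm \<Rightarrow> 'm) \<Rightarrow>
     ('g \<Rightarrow> real) \<Rightarrow> ('m \<Rightarrow> complex) \<Rightarrow> ('m \<Rightarrow> complex)" where
  "p_lam \<mu> act l a = (\<lambda>m. LINT x|\<mu>. complex_of_real (l x) * alpha act x a m)"

text \<open>Convergence of a net indexed by Bset (directed pointwise) in the strict topology of
  M(A) = C_b(M), A = C_0(M) commutative: h_l \<rightarrow> h iff \<parallel>(h_l - h) a\<parallel>_\<infinity> \<rightarrow> 0 for all a in A.\<close>

definition strict_conv :: "(('g::topological_space \<Rightarrow> real) \<Rightarrow> ('m::topological_space \<Rightarrow> complex)) \<Rightarrow> ('m \<Rightarrow> complex) \<Rightarrow> bool" where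
  "strict_conv net h \<longleftrightarrow>
     (\<forall>a\<in>C0. \<forall>e>0. \<exists>l0\<in>Bset. \<forall>l\<in>Bset. (\<forall>x. l0 x \<le> l x) \<longrightarrow>
        (\<forall>m. norm ((net l m - h m) * a m) \<le> e))"

definition alpha_proper_elt :: "'g::{topological_group_add,t2_space} measure \<Rightarrow> ('g \<Rightarrow> 'm \<Rightarrow> 'm) \<Rightarrow>
     ('m::topological_space \<Rightarrow> complex) \<Rightarrow> bool" where
  "alpha_proper_elt \<mu> act a \<longleftrightarrow>
     a \<in> C0 \<and> (\<forall>m. a m \<in> \<real> \<and> Re (a m) \<ge> 0) \<and>
     (\<exists>h\<in>Cb. strict_conv (\<lambda>l. p_lam \<mu> act l a) h)"

definition P_alpha :: "'g::{topological_group_add,t2_space} measure \<Rightarrow> ('g \<Rightarrow> 'm \<Rightarrow> 'm) \<Rightarrow>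
     ('m::topological_space \<Rightarrow> complex) set" where
  "P_alpha \<mu> act = {f. \<exists>n::nat. \<exists>c a. (\<forall>i<n. alpha_proper_elt \<mu> act (a i)) \<and>
                        f = (\<lambda>m. \<Sum>i<n. c i * a i m)}"

definition proper_action :: "'g::{topological_group_add,t2_space} measure \<Rightarrow> ('g \<Rightarrow> 'm::topological_space \<Rightarrow> 'm) \<Rightarrow> bool" where
  "proper_action \<mu> act \<longleftrightarrow>
     (\<forall>a\<in>C0. \<forall>e>0. \<exists>f\<in>P_alpha \<mu> act. \<forall>m::'m. norm (a m - f m) < e)"

definition psi_alpha :: "'g::{topological_group_add,t2_space} measure \<Rightarrow> ('g \<Rightarrow> 'm \<Rightarrow> 'm) \<Rightarrow>
     ('m::topological_space \<Rightarrow> complex) \<Rightarrow> ('m \<Rightarrow> complex)" where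
  "psi_alpha \<mu> act a = (THE h. h \<in> Cb \<and> strict_conv (\<lambda>l. p_lam \<mu> act l a) h)"

definition orbit :: "('g \<Rightarrow> 'm \<Rightarrow> 'm) \<Rightarrow> 'm \<Rightarrow> 'm set" where
  "orbit act m = range (\<lambda>x. act x m)"

definition orbit_space :: "('g \<Rightarrow> 'm::topological_space \<Rightarrow> 'm) \<Rightarrow> 'm set topology" where
  "orbit_space act = topology (\<lambda>U. U \<subseteq> range (orbit act) \<and> open {m. orbit act m \<in> U})"

text \<open>An alpha-invariant function h on M, viewed as a function on M/alpha.\<close>

definition on_orbits :: "('m \<Rightarrow> complex) \<Rightarrow> 'm set \<Rightarrow> complex" where
  "on_orbits h Orb = h (SOME m. m \<in> Orb)"

definition alpha_invariant :: "('g::group_add \<Rightarrow> 'm \<Rightarrow> 'm) \<Rightarrow> ('m \<Rightarrow> complex) \<Rightarrow> bool" where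
  "alpha_invariant act h \<longleftrightarrow> (\<forall>x. alpha act x h = h)"

end

theory Submission
  imports Defs
begin

lemma Hausdorff_euclidean_t2: "Hausdorff_space (euclidean :: 'm::t2_space topology)"
  unfolding Hausdorff_space_def by (metis disjnt_def hausdorff open_openin)

lemma bump:
  fixes m0 :: "'m::t2_space"
  assumes "locally_compact_space (euclidean :: 'm topology)"
  shows "\<exists>a\<in>C0. a m0 = 1"
proof -
  obtain U K where U: "open U" "compact K" "m0 \<in> U" "U \<subseteq> K"
    using assms unfolding locally_compact_space_def compactin_euclidean_iff
    by (auto simp: open_openin[symmetric]) blast
  have "completely_regular_space (euclidean :: 'm topology)"
    using locally_compact_regular_imp_completely_regular_space[OF assms] Hausdorff_euclidean_t2 by blast
  then obtain f :: "'m \<Rightarrow> real" where f: "continuous_map euclidean (top_of_set {0..1}) f"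
     "f m0 = 0" "f ` (UNIV - U) \<subseteq> {1}"
  proof -
    have "closedin euclidean (UNIV - U)" using U(1) by (simp add: closed_closedin[symmetric] open_closed[symmetric] Compl_eq_Diff_UNIV[symmetric])
    moreover have "m0 \<in> topspace euclidean - (UNIV - U)" using U(3) by simp
    ultimately show ?thesis using that \<open>completely_regular_space euclidean\<close> unfolding completely_regular_space_def by blast
  qed
  have cf: "continuous_on UNIV f"
    using f(1) by (simp add: continuous_map_in_subtopology continuous_map_iff_continuous2)
  define a where "a = (\<lambda>m. complex_of_real (1 - f m))"
  have "continuous_on UNIV a" unfolding a_def
    by (intro continuous_intros cf)
  moreover have "\<forall>y. y \<notin> K \<longrightarrow> a y = 0" using f(3) U(4) unfolding a_def by auto
  ultimately have "a \<in> C0"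
    unfolding C0_def C0_on_def continuous_map_iff_continuous2
    using U(2) by (intro CollectI conjI allI impI exI[of _ K]) (auto simp: compactin_euclidean_iff)
  moreover have "a m0 = 1" using f(2) by (simp add: a_def)
  ultimately show ?thesis by blast
qed


lemma Bset_max: assumes "l1 \<in> Bset" "l2 \<in> Bset" shows "(\<lambda>x. max (l1 x) (l2 x)) \<in> Bset"
proof -
  obtain K1 K2 where K: "compact K1" "\<forall>x. x \<notin> K1 \<longrightarrow> l1 x = 0" "compact K2" "\<forall>x. x \<notin> K2 \<longrightarrow> l2 x = 0"
    using assms unfolding Bset_def by blast
  have "\<forall>x. 0 \<le> max (l1 x) (l2 x) \<and> max (l1 x) (l2 x) \<le> 1" using assms unfolding Bset_def
    by (auto simp: max_def)
  then show ?thesis using assms K unfolding Bset_def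
    by (auto intro!: exI[of _ "K1 \<union> K2"] borel_measurable_max compact_Un)
qed

lemma Bset_zero: "(\<lambda>x. 0) \<in> Bset" unfolding Bset_def by (auto intro!: exI[of _ "{}"])

lemma Bset_nonempty: "Bset \<noteq> {}" using Bset_zero by blast

lemma Bset_shift:
  fixes l :: "'g::topological_group_add \<Rightarrow> real"
  assumes "l \<in> Bset" shows "(\<lambda>z. l (y + z)) \<in> Bset"
proof -
  obtain K where K: "compact K" "\<forall>x. x \<notin> K \<longrightarrow> l x = 0" and lm: "l \<in> borel_measurable borel"
    and lb: "\<forall>x. 0 \<le> l x \<and> l x \<le> 1"
    using assms unfolding Bset_def by blast
  have cK: "compact ((\<lambda>w. -y + w) ` K)"
    by (intro compact_continuous_image K(1) continuous_intros)
  have "\<forall>z. z \<notin> (\<lambda>w. -y + w) ` K \<longrightarrow> l (y + z) = 0"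
  proof (intro allI impI)
    fix z assume "z \<notin> (\<lambda>w. -y + w) ` K"
    show "l (y + z) = 0"
    proof (rule ccontr)
      assume "l (y + z) \<noteq> 0"
      then have "y + z \<in> K" using K(2) by blast
      then have "-y + (y + z) \<in> (\<lambda>w. -y + w) ` K" by (rule imageI)
      then show False using \<open>z \<notin> _\<close> by (simp add: minus_add_cancel)
    qed
  qed
  moreover have "(\<lambda>z. l (y + z)) \<in> borel_measurable borel"
  proof -
    have c: "continuous_on UNIV (\<lambda>z::'g. y + z)" by (intro continuous_on_add continuous_on_const continuous_on_id)
    show ?thesis by (rule measurable_compose[OF borel_measurable_continuous_onI[OF c] lm])
  qed
  ultimately show ?thesis using cK lb unfolding Bset_def by blast
qed

lemma act_cont:
  assumes "continuous_action act" "continuous_on UNIV u"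
  shows "continuous_on UNIV (\<lambda>p. u (act (- fst p) (snd p)))"
proof -
  have c: "continuous_on UNIV (\<lambda>p. act (fst p) (snd p))"
    using assms(1) unfolding continuous_action_def by (simp add: case_prod_beta')
  have "continuous_on UNIV (\<lambda>p. act (- fst p) (snd p))"
  proof -
    have "continuous_on UNIV (\<lambda>p::'a \<times> 'b. (- fst p, snd p))"
      by (intro continuous_on_Pair continuous_on_minus continuous_on_fst continuous_on_snd continuous_on_id)
    from continuous_on_compose2[OF c this] show ?thesis by simp
  qed
  then show ?thesis
    using continuous_on_compose2[OF assms(2), of UNIV "\<lambda>p. act (- fst p) (snd p)"] by auto
qed

lemma act_cont_m:
  assumes "continuous_action act" "continuous_on UNIV u"
  shows "continuous_on UNIV (\<lambda>x. u (act (- x) m))"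
proof -
  have "continuous_on UNIV (\<lambda>x::'a. (x, m))"
    by (intro continuous_on_Pair continuous_on_const continuous_on_id)
  from continuous_on_compose2[OF act_cont[OF assms] this] show ?thesis by simp
qed

lemma haar_sets: "left_haar_measure \<mu> \<Longrightarrow> sets \<mu> = sets borel"
  unfolding left_haar_measure_def by (elim conjE)

lemma haar_compact: "left_haar_measure \<mu> \<Longrightarrow> compact K \<Longrightarrow> emeasure \<mu> K < \<infinity>"
  unfolding left_haar_measure_def by (elim conjE) (erule allE, erule mp)

lemma haar_inv: "left_haar_measure \<mu> \<Longrightarrow> E \<in> sets borel \<Longrightarrow> emeasure \<mu> ((\<lambda>y. x + y) ` E) = emeasure \<mu> E"
  unfolding left_haar_measure_def by (elim conjE) (erule ballE, erule allE, assumption, simp)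

lemma integ:
  fixes \<mu> :: "'g::{topological_group_add,t2_space} measure" and F :: "'g \<Rightarrow> complex"
  assumes "left_haar_measure \<mu>" "l \<in> Bset" "continuous_on UNIV F" "\<forall>x. norm (F x) \<le> B"
  shows "integrable \<mu> (\<lambda>x. complex_of_real (l x) * F x)"
proof -
  obtain K where K: "compact K" "\<forall>x. x \<notin> K \<longrightarrow> l x = 0" and lm: "l \<in> borel_measurable borel"
    and lb: "\<forall>x. 0 \<le> l x \<and> l x \<le> 1"
    using assms unfolding Bset_def by blast
  have S: "sets \<mu> = sets borel" using haar_sets[OF assms(1)] .
  have Ks: "K \<in> sets \<mu>" using S K(1) by (simp add: borel_closed compact_imp_closed)
  have Kf: "emeasure \<mu> K < \<infinity>" using haar_compact[OF assms(1) K(1)] .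
  have i1: "integrable \<mu> (\<lambda>x. B * indicator K x)"
    using integrable_real_indicator[OF Ks Kf] by simp
  have Fm: "F \<in> borel_measurable borel" using assms(3) by (rule borel_measurable_continuous_onI)
  have "(\<lambda>x. complex_of_real (l x) * F x) \<in> borel_measurable borel"
    using lm Fm by (intro borel_measurable_times measurable_compose[OF lm borel_measurable_of_real]) 
  then have m: "(\<lambda>x. complex_of_real (l x) * F x) \<in> borel_measurable \<mu>"
    using measurable_cong_sets[OF S refl] by blast
  have B0: "0 \<le> B" using assms(4)[rule_format, of undefined] norm_ge_zero[of "F undefined"] by linarith
  have "norm (complex_of_real (l x) * F x) \<le> norm (B * indicator K x)" for x
  proof (cases "x \<in> K")
    case True
    then have "norm (complex_of_real (l x) * F x) = l x * norm (F x)" using lb by (simp add: norm_mult)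
    also have "\<dots> \<le> 1 * B" using lb assms(4) by (intro mult_mono) auto
    finally show ?thesis using True B0 by simp
  next
    case False then show ?thesis using K(2) by simp
  qed
  then show ?thesis by (intro Bochner_Integration.integrable_bound[OF i1 m]) auto
qed


lemma cont_crit:
  fixes h :: "'m::t2_space \<Rightarrow> 'b::metric_space"
  assumes "\<And>m0 e. 0 < e \<Longrightarrow> \<exists>S. open S \<and> m0 \<in> S \<and> (\<forall>m\<in>S. dist (h m) (h m0) < e)"
  shows "continuous_on UNIV h"
proof -
  have "isCont h x" for x
    unfolding isCont_def tendsto_iff eventually_at_topological
    apply (intro allI impI)
    subgoal for e using assms[of e x] by fastforce
    done
  then show ?thesis by (simp add: continuous_at_imp_continuous_on)
qed
lemma my_norm_bound_integral:
  fixes f :: "'a \<Rightarrow> 'b::{banach,second_countable_topology}"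
  assumes "integrable M f" "integrable M g" "\<And>x. x \<in> space M \<Longrightarrow> norm(f x) \<le> g x"
  shows "norm (\<integral>x. f x \<partial>M) \<le> (\<integral>x. g x \<partial>M)"
proof -
  have "norm (\<integral>x. f x \<partial>M) \<le> (\<integral>x. norm (f x) \<partial>M)" by (rule integral_norm_bound)
  also have "\<dots> \<le> (\<integral>x. g x \<partial>M)" using assms by (intro integral_mono) auto
  finally show ?thesis .
qed

lemma integ_m:
  fixes \<mu> :: "'g::{topological_group_add,t2_space} measure" and u :: "'m::topological_space \<Rightarrow> complex"
  assumes "left_haar_measure \<mu>" "continuous_action act" "l \<in> Bset" "continuous_on UNIV u" "\<forall>m. norm (u m) \<le> B"
  shows "integrable \<mu> (\<lambda>x. complex_of_real (l x) * u (act (- x) m))"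
  using integ[OF assms(1,3) act_cont_m[OF assms(2,4)], where B=B] assms(5) by blast

lemma integ_real:
  fixes \<mu> :: "'g::{topological_group_add,t2_space} measure" and U :: "'m::topological_space \<Rightarrow> real"
  assumes "left_haar_measure \<mu>" "continuous_action act" "l \<in> Bset" "continuous_on UNIV U" "\<forall>m. \<bar>U m\<bar> \<le> B"
  shows "integrable \<mu> (\<lambda>x. l x * U (act (- x) m))"
proof -
  have c: "continuous_on UNIV (\<lambda>m. complex_of_real (U m))" by (intro continuous_on_of_real assms(4))
  have "integrable \<mu> (\<lambda>x. complex_of_real (l x) * complex_of_real (U (act (- x) m)))"
    using integ_m[OF assms(1,2,3) c, where B=B] assms(5) by simp
  then have "integrable \<mu> (\<lambda>x. complex_of_real (l x * U (act (- x) m)))" by simp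
  then show ?thesis using complex_of_real_integrable_eq by blast
qed

lemma pl_real:
  assumes "\<forall>m. u m = complex_of_real (U m)"
  shows "p_lam \<mu> act l u m = complex_of_real (LINT x|\<mu>. l x * U (act (- x) m))"
  unfolding p_lam_def alpha_def using assms by (simp only: of_real_mult[symmetric] integral_complex_of_real)

lemma pl_lin:
  fixes \<mu> :: "'g::{topological_group_add,t2_space} measure" and u v :: "'m::topological_space \<Rightarrow> complex"
  assumes "left_haar_measure \<mu>" "continuous_action act" "l \<in> Bset"
    "continuous_on UNIV u" "\<forall>m. norm (u m) \<le> B1" "continuous_on UNIV v" "\<forall>m. norm (v m) \<le> B2"
  shows "p_lam \<mu> act l (\<lambda>m. c * u m + v m) m = c * p_lam \<mu> act l u m + p_lam \<mu> act l v m"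
proof -
  have iu: "integrable \<mu> (\<lambda>x. complex_of_real (l x) * u (act (- x) m))" by (rule integ_m[OF assms(1-5)])
  have iv: "integrable \<mu> (\<lambda>x. complex_of_real (l x) * v (act (- x) m))" by (rule integ_m[OF assms(1-3,6,7)])
  have "(\<lambda>x. complex_of_real (l x) * (c * u (act (- x) m) + v (act (- x) m)))
      = (\<lambda>x. c * (complex_of_real (l x) * u (act (- x) m)) + complex_of_real (l x) * v (act (- x) m))"
    by (auto simp: algebra_simps)
  then show ?thesis unfolding p_lam_def alpha_def
    using iu iv by (simp add: integral_add integral_mult_right_zero)
qed

lemma pl_cont:
  fixes \<mu> :: "'g::{topological_group_add,t2_space} measure" and u :: "'m::t2_space \<Rightarrow> complex"
  assumes lhm: "left_haar_measure \<mu>" and ca: "continuous_action act" and lB: "l \<in> Bset"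
    and cu: "continuous_on UNIV u" and bu: "\<forall>m. norm (u m) \<le> B"
  shows "continuous_on UNIV (p_lam \<mu> act l u)"
proof (rule cont_crit)
  fix m0 :: 'm and e :: real assume e: "0 < e"
  obtain K where K: "compact K" "\<forall>x. x \<notin> K \<longrightarrow> l x = 0" and lb: "\<forall>x. 0 \<le> l x \<and> l x \<le> 1"
    using lB unfolding Bset_def by blast
  have S: "sets \<mu> = sets borel" using haar_sets[OF lhm] .
  have Ks: "K \<in> sets \<mu>" using S K(1) by (simp add: borel_closed compact_imp_closed)
  have Kf: "emeasure \<mu> K < \<infinity>" using haar_compact[OF lhm K(1)] .
  define C where "C = measure \<mu> K"
  have C0: "0 \<le> C" unfolding C_def by simp
  define e' where "e' = e / (C + 1)"
  have e': "0 < e'" unfolding e'_def using e C0 by simp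
  have e'C: "e' * C < e" unfolding e'_def using e C0 by (simp add: field_simps)
  have cF: "continuous_on UNIV (\<lambda>p::'g \<times> 'm. u (act (- fst p) (snd p)))" by (rule act_cont[OF ca cu])
  have c1: "continuous_on UNIV (\<lambda>p::'m \<times> 'g. u (act (- snd p) (fst p)))"
  proof -
    have "continuous_on UNIV (\<lambda>p::'m \<times> 'g. (snd p, fst p))"
      by (intro continuous_on_Pair continuous_on_fst continuous_on_snd continuous_on_id)
    from continuous_on_compose2[OF cF this] show ?thesis by simp
  qed
  have c2: "continuous_on UNIV (\<lambda>p::'m \<times> 'g. u (act (- snd p) m0))"
  proof -
    have "continuous_on UNIV (\<lambda>p::'m \<times> 'g. (snd p, m0))"
      by (intro continuous_on_Pair continuous_on_const continuous_on_snd continuous_on_id)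
    from continuous_on_compose2[OF cF this] show ?thesis by simp
  qed
  define W where "W = {p::'m \<times> 'g. dist (u (act (- snd p) (fst p))) (u (act (- snd p) m0)) < e'}"
  have oW: "open W" unfolding W_def
    by (intro open_Collect_less continuous_on_dist c1 c2 continuous_on_const)
  have "{m0} \<times> K \<subseteq> W" unfolding W_def using e' by auto
  then obtain X0 where X0: "m0 \<in> X0" "open X0" "X0 \<times> K \<subseteq> W"
    using Elementary_Topology.tube_lemma[OF K(1) oW] by blast
  have "\<forall>m\<in>X0. dist (p_lam \<mu> act l u m) (p_lam \<mu> act l u m0) < e"
  proof
    fix m assume m: "m \<in> X0"
    have i1: "integrable \<mu> (\<lambda>x. complex_of_real (l x) * u (act (- x) m))" by (rule integ_m[OF lhm ca lB cu bu])
    have i2: "integrable \<mu> (\<lambda>x. complex_of_real (l x) * u (act (- x) m0))" by (rule integ_m[OF lhm ca lB cu bu])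
    have ig: "integrable \<mu> (\<lambda>x. e' * indicator K x)"
      using integrable_real_indicator[OF Ks Kf] by simp
    have bd: "norm (complex_of_real (l x) * u (act (- x) m) - complex_of_real (l x) * u (act (- x) m0)) \<le> e' * indicator K x" for x
    proof (cases "x \<in> K")
      case True
      then have "(m, x) \<in> W" using X0(3) m by blast
      then have d: "norm (u (act (- x) m) - u (act (- x) m0)) < e'" unfolding W_def by (simp add: dist_norm)
      have "norm (complex_of_real (l x) * u (act (- x) m) - complex_of_real (l x) * u (act (- x) m0))
          = l x * norm (u (act (- x) m) - u (act (- x) m0))"
        using lb by (simp add: right_diff_distrib[symmetric] norm_mult)
      also have "\<dots> \<le> 1 * e'" using lb d by (intro mult_mono) auto
      finally show ?thesis using True by simp
    next
      case False then show ?thesis using K(2) by simp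
    qed
    have "dist (p_lam \<mu> act l u m) (p_lam \<mu> act l u m0)
        = norm (LINT x|\<mu>. complex_of_real (l x) * u (act (- x) m) - complex_of_real (l x) * u (act (- x) m0))"
      unfolding p_lam_def alpha_def dist_norm using i1 i2 by (simp add: integral_diff)
    also have "\<dots> \<le> (LINT x|\<mu>. e' * indicator K x)"
      by (rule my_norm_bound_integral[OF Bochner_Integration.integrable_diff[OF i1 i2] ig]) (use bd in blast)
    also have "\<dots> = e' * C" unfolding C_def using Ks Kf by simp
    finally show "dist (p_lam \<mu> act l u m) (p_lam \<mu> act l u m0) < e" using e'C by linarith
  qed
  then show "\<exists>S. open S \<and> m0 \<in> S \<and> (\<forall>m\<in>S. dist (p_lam \<mu> act l u m) (p_lam \<mu> act l u m0) < e)"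
    using X0 by blast
qed


lemma scal_bound: "0 < e \<Longrightarrow> (x::real) \<ge> 0 \<Longrightarrow> x * (e / (2 * (x + 1))) \<le> e / 2"
  by (simp add: field_simps)

lemma C0_iff: "u \<in> C0 \<longleftrightarrow> continuous_on UNIV u \<and> (\<forall>e>0. \<exists>K. compact K \<and> (\<forall>y. y \<notin> K \<longrightarrow> norm (u y) < e))"
  unfolding C0_def C0_on_def continuous_map_iff_continuous2 compactin_euclidean_iff by (simp add: Ball_def)

lemma C0_bounded:
  assumes "u \<in> C0" shows "\<exists>B. \<forall>m. norm (u m) \<le> B"
proof -
  obtain K where K: "compact K" "\<forall>y. y \<notin> K \<longrightarrow> norm (u y) < 1" and c: "continuous_on UNIV u"
    using assms unfolding C0_iff by (meson zero_less_one)
  have "compact (u ` K)" by (rule compact_continuous_image[OF continuous_on_subset[OF c] K(1)]) auto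
  then obtain B where B: "\<forall>z\<in>u ` K. norm z \<le> B" using compact_imp_bounded bounded_iff by metis
  have "norm (u m) \<le> max B 1" for m
    using B K(2) by (cases "m \<in> K") (auto simp: le_max_iff_disj less_imp_le)
  then show ?thesis by blast
qed

lemma C0_lin:
  assumes "u \<in> C0" "v \<in> C0" shows "(\<lambda>m. c * u m + v m) \<in> C0"
  unfolding C0_iff
proof (intro conjI allI impI)
  show "continuous_on UNIV (\<lambda>m. c * u m + v m)"
    using assms unfolding C0_iff by (intro continuous_intros) auto
next
  fix e :: real assume e: "0 < e"
  define e1 where "e1 = e / (2 * (norm c + 1))"
  have e1: "0 < e1" unfolding e1_def using e add_nonneg_pos[OF norm_ge_zero[of c] zero_less_one] by (intro divide_pos_pos mult_pos_pos) auto
  obtain K1 where K1: "compact K1" "\<forall>y. y \<notin> K1 \<longrightarrow> norm (u y) < e1" using assms(1) e1 unfolding C0_iff by blast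
  obtain K2 where K2: "compact K2" "\<forall>y. y \<notin> K2 \<longrightarrow> norm (v y) < e/2" using assms(2) e unfolding C0_iff
    by (meson half_gt_zero)
  have "norm (c * u y + v y) < e" if "y \<notin> K1 \<union> K2" for y
  proof -
    have "norm (c * u y + v y) \<le> norm c * norm (u y) + norm (v y)" by (metis norm_mult norm_triangle_ineq)
    also have "norm c * norm (u y) \<le> norm c * e1" using K1(2) that by (intro mult_left_mono) auto
    also have "norm c * e1 \<le> e / 2" unfolding e1_def using scal_bound[OF e norm_ge_zero[of c]] .
    finally show ?thesis using K2(2) that by auto
  qed
  then show "\<exists>K. compact K \<and> (\<forall>y. y \<notin> K \<longrightarrow> norm (c * u y + v y) < e)"
    using K1(1) K2(1) by (intro exI[of _ "K1 \<union> K2"]) auto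
qed

lemma C0_zero: "(\<lambda>m. 0) \<in> C0" unfolding C0_iff by (auto intro!: exI[of _ "{}"])

lemma C0_mult:
  assumes "u \<in> C0" "v \<in> C0" shows "(\<lambda>m. u m * v m) \<in> C0"
  unfolding C0_iff
proof (intro conjI allI impI)
  show "continuous_on UNIV (\<lambda>m. u m * v m)"
    using assms unfolding C0_iff by (intro continuous_intros) auto
next
  fix e :: real assume e: "0 < e"
  obtain B where B: "\<forall>m. norm (v m) \<le> B" using C0_bounded[OF assms(2)] by blast
  have B0: "0 \<le> B" using B[rule_format, of undefined] norm_ge_zero[of "v undefined"] by linarith
  define e1 where "e1 = e / (B + 1)"
  have e1: "0 < e1" unfolding e1_def using e B0 by simp
  obtain K1 where K1: "compact K1" "\<forall>y. y \<notin> K1 \<longrightarrow> norm (u y) < e1" using assms(1) e1 unfolding C0_iff by blast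
  have "norm (u y * v y) < e" if "y \<notin> K1" for y
  proof -
    have "norm (u y * v y) = norm (u y) * norm (v y)" by (simp add: norm_mult)
    also have "\<dots> \<le> e1 * B" using K1(2) that B e1 by (intro mult_mono) (auto simp: less_imp_le)
    also have "e1 * B < e" unfolding e1_def using e B0 by (simp add: field_simps)
    finally show ?thesis .
  qed
  then show "\<exists>K. compact K \<and> (\<forall>y. y \<notin> K \<longrightarrow> norm (u y * v y) < e)"
    using K1(1) by blast
qed

lemma sc_pointwise:
  fixes h :: "'m::t2_space \<Rightarrow> complex"
  assumes LC: "locally_compact_space (euclidean :: 'm topology)"
    and sc: "strict_conv net h" and e: "0 < e"
  shows "\<exists>l0\<in>Bset. \<forall>l\<in>Bset. (\<forall>x. l0 x \<le> l x) \<longrightarrow> norm (net l m - h m) \<le> e"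
proof -
  obtain a where a: "a \<in> C0" "a m = 1" using bump[OF LC] by blast
  obtain l0 where "l0 \<in> Bset" "\<forall>l\<in>Bset. (\<forall>x. l0 x \<le> l x) \<longrightarrow> (\<forall>m. norm ((net l m - h m) * a m) \<le> e)"
    using sc a(1) e unfolding strict_conv_def by blast
  then show ?thesis using a(2) by (metis mult.right_neutral)
qed


lemma sc_unique:
  fixes h1 h2 :: "'m::t2_space \<Rightarrow> complex"
  assumes LC: "locally_compact_space (euclidean :: 'm topology)"
    and s1: "strict_conv net h1" and s2: "strict_conv net h2"
  shows "h1 = h2"
proof
  fix m
  have *: "norm (h1 m - h2 m) \<le> 2 * e" if e: "0 < e" for e
  proof -
    obtain l1 where l1: "l1 \<in> Bset" "\<forall>l\<in>Bset. (\<forall>x. l1 x \<le> l x) \<longrightarrow> norm (net l m - h1 m) \<le> e"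
      using sc_pointwise[OF LC s1 e] by blast
    obtain l2 where l2: "l2 \<in> Bset" "\<forall>l\<in>Bset. (\<forall>x. l2 x \<le> l x) \<longrightarrow> norm (net l m - h2 m) \<le> e"
      using sc_pointwise[OF LC s2 e] by blast
    define l where "l = (\<lambda>x. max (l1 x) (l2 x))"
    have lB: "l \<in> Bset" unfolding l_def by (rule Bset_max[OF l1(1) l2(1)])
    have a: "norm (net l m - h1 m) \<le> e" using l1(2) lB unfolding l_def by auto
    have b: "norm (net l m - h2 m) \<le> e" using l2(2) lB unfolding l_def by auto
    have "h1 m - h2 m = (net l m - h2 m) - (net l m - h1 m)" by simp
    then have "norm (h1 m - h2 m) \<le> norm (net l m - h2 m) + norm (net l m - h1 m)"
      using norm_triangle_ineq4 by metis
    then show ?thesis using a b by linarith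
  qed
  show "h1 m = h2 m"
  proof (rule ccontr)
    assume "h1 m \<noteq> h2 m"
    then have d: "0 < norm (h1 m - h2 m)" by simp
    have "norm (h1 m - h2 m) \<le> 2 * (norm (h1 m - h2 m) / 4)" using * d by (intro *) auto
    then show False using d by simp
  qed
qed

lemma sc_cong:
  assumes "\<And>l m. l \<in> Bset \<Longrightarrow> n1 l m = n2 l m"
  shows "strict_conv n1 h = strict_conv n2 h"
  unfolding strict_conv_def using assms by auto

lemma sc_lin:
  fixes n1 n2 :: "('g::topological_space \<Rightarrow> real) \<Rightarrow> 'm::topological_space \<Rightarrow> complex"
  assumes s1: "strict_conv n1 h1" and s2: "strict_conv n2 h2"
  shows "strict_conv (\<lambda>l m. c * n1 l m + n2 l m) (\<lambda>m. c * h1 m + h2 m)"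
  unfolding strict_conv_def
proof (intro ballI allI impI)
  fix a :: "'m \<Rightarrow> complex" and e :: real assume a: "a \<in> C0" and e: "0 < e"
  define e1 where "e1 = e / (2 * (norm c + 1))"
  have e1: "0 < e1" unfolding e1_def using e add_nonneg_pos[OF norm_ge_zero[of c] zero_less_one] by (intro divide_pos_pos mult_pos_pos) auto
  obtain l1 where l1: "l1 \<in> Bset" "\<forall>l\<in>Bset. (\<forall>x. l1 x \<le> l x) \<longrightarrow> (\<forall>m. norm ((n1 l m - h1 m) * a m) \<le> e1)"
    using s1 a e1 unfolding strict_conv_def by blast
  obtain l2 where l2: "l2 \<in> Bset" "\<forall>l\<in>Bset. (\<forall>x. l2 x \<le> l x) \<longrightarrow> (\<forall>m. norm ((n2 l m - h2 m) * a m) \<le> e / 2)"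
    using s2 a e unfolding strict_conv_def by (meson half_gt_zero)
  define l0 where "l0 = (\<lambda>x. max (l1 x) (l2 x))"
  have l0B: "l0 \<in> Bset" unfolding l0_def by (rule Bset_max[OF l1(1) l2(1)])
  have "\<forall>l\<in>Bset. (\<forall>x. l0 x \<le> l x) \<longrightarrow>
      (\<forall>m. norm ((c * n1 l m + n2 l m - (c * h1 m + h2 m)) * a m) \<le> e)"
  proof (intro ballI impI allI)
    fix l m assume lB: "l \<in> Bset" and ge: "\<forall>x. l0 x \<le> l x"
    have A: "norm ((n1 l m - h1 m) * a m) \<le> e1" using l1(2) lB ge unfolding l0_def by auto
    have Bb: "norm ((n2 l m - h2 m) * a m) \<le> e / 2" using l2(2) lB ge unfolding l0_def by auto
    have "(c * n1 l m + n2 l m - (c * h1 m + h2 m)) * a m = c * ((n1 l m - h1 m) * a m) + (n2 l m - h2 m) * a m"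
      by (simp add: algebra_simps)
    then have "norm ((c * n1 l m + n2 l m - (c * h1 m + h2 m)) * a m)
        \<le> norm c * norm ((n1 l m - h1 m) * a m) + norm ((n2 l m - h2 m) * a m)"
      by (metis norm_mult norm_triangle_ineq)
    also have "norm c * norm ((n1 l m - h1 m) * a m) \<le> norm c * e1" using A by (intro mult_left_mono) auto
    also have "norm c * e1 \<le> e / 2" unfolding e1_def using scal_bound[OF e norm_ge_zero[of c]] .
    finally show "norm ((c * n1 l m + n2 l m - (c * h1 m + h2 m)) * a m) \<le> e" using Bb by linarith
  qed
  then show "\<exists>l0\<in>Bset. \<forall>l\<in>Bset. (\<forall>x. l0 x \<le> l x) \<longrightarrow>
      (\<forall>m. norm ((c * n1 l m + n2 l m - (c * h1 m + h2 m)) * a m) \<le> e)" using l0B by blast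
qed

lemma Cb_lin:
  assumes "h1 \<in> Cb" "h2 \<in> Cb" shows "(\<lambda>m. c * h1 m + h2 m) \<in> Cb"
proof -
  obtain B1 B2 where B: "\<forall>m. norm (h1 m) \<le> B1" "\<forall>m. norm (h2 m) \<le> B2"
    using assms unfolding Cb_def by blast
  have "norm (c * h1 m + h2 m) \<le> norm c * B1 + B2" for m
  proof -
    have "norm (c * h1 m + h2 m) \<le> norm c * norm (h1 m) + norm (h2 m)" by (metis norm_mult norm_triangle_ineq)
    also have "\<dots> \<le> norm c * B1 + B2" using B by (intro add_mono mult_left_mono) auto
    finally show ?thesis .
  qed
  moreover have "continuous_on UNIV (\<lambda>m. c * h1 m + h2 m)"
    using assms unfolding Cb_def by (intro continuous_intros) auto
  ultimately show ?thesis unfolding Cb_def by blast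
qed

lemma Cb_zero: "(\<lambda>m. 0) \<in> Cb" unfolding Cb_def by auto


lemma real_fun_props:
  assumes "u \<in> C0" "\<forall>m. u m = complex_of_real (U m)"
  shows "continuous_on UNIV U" "\<exists>B. \<forall>m. \<bar>U m\<bar> \<le> B"
proof -
  have eq: "U = (\<lambda>m. Re (u m))" using assms(2) by auto
  show "continuous_on UNIV U" unfolding eq using assms(1) unfolding C0_iff
    by (intro continuous_intros) auto
  obtain B where "\<forall>m. norm (u m) \<le> B" using C0_bounded[OF assms(1)] by blast
  then show "\<exists>B. \<forall>m. \<bar>U m\<bar> \<le> B" using assms(2) by (metis norm_of_real)
qed

lemma hered:
  fixes \<mu> :: "'g::{topological_group_add,t2_space} measure" and act :: "'g \<Rightarrow> 'm::t2_space \<Rightarrow> 'm"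
  assumes lhm: "left_haar_measure \<mu>" and ca: "continuous_action act"
    and LC: "locally_compact_space (euclidean :: 'm topology)"
    and cC: "c \<in> C0" and dC: "d \<in> C0"
    and cr: "\<forall>m. c m = complex_of_real (Cr m)" and dr: "\<forall>m. d m = complex_of_real (Dr m)"
    and le: "\<forall>m. 0 \<le> Dr m \<and> Dr m \<le> Cr m"
    and sc: "strict_conv (\<lambda>l. p_lam \<mu> act l c) hc" and hcb: "hc \<in> Cb"
  shows "\<exists>hd\<in>Cb. strict_conv (\<lambda>l. p_lam \<mu> act l d) hd"
proof -
  obtain Bc where Bc: "\<forall>m. \<bar>Cr m\<bar> \<le> Bc" using real_fun_props(2)[OF cC cr] by blast
  obtain Bd where Bd: "\<forall>m. \<bar>Dr m\<bar> \<le> Bd" using real_fun_props(2)[OF dC dr] by blast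
  have cCr: "continuous_on UNIV Cr" using real_fun_props(1)[OF cC cr] .
  have cDr: "continuous_on UNIV Dr" using real_fun_props(1)[OF dC dr] .
  define Er where "Er = (\<lambda>m. Cr m - Dr m)"
  have cEr: "continuous_on UNIV Er" unfolding Er_def by (intro continuous_intros cCr cDr)
  have Be: "\<forall>m. \<bar>Er m\<bar> \<le> Bc + Bd" unfolding Er_def using Bc Bd by (metis abs_triangle_ineq4 add_mono order_trans)
  define P where "P = (\<lambda>l m. LINT x|\<mu>. l x * Dr (act (- x) m))"
  define Q where "Q = (\<lambda>l m. LINT x|\<mu>. l x * Er (act (- x) m))"
  define R where "R = (\<lambda>l m. LINT x|\<mu>. l x * Cr (act (- x) m))"
  have iD: "integrable \<mu> (\<lambda>x. l x * Dr (act (- x) m))" if "l \<in> Bset" for l m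
    by (rule integ_real[OF lhm ca that cDr Bd])
  have iE: "integrable \<mu> (\<lambda>x. l x * Er (act (- x) m))" if "l \<in> Bset" for l m
    by (rule integ_real[OF lhm ca that cEr Be])
  have RPQ: "R l m = P l m + Q l m" if "l \<in> Bset" for l m
  proof -
    have "(\<lambda>x. l x * Cr (act (- x) m)) = (\<lambda>x. l x * Dr (act (- x) m) + l x * Er (act (- x) m))"
      unfolding Er_def by (auto simp: algebra_simps)
    then show ?thesis unfolding R_def P_def Q_def using iD[OF that] iE[OF that] by simp
  qed
  have pd: "p_lam \<mu> act l d m = complex_of_real (P l m)" for l m unfolding P_def by (rule pl_real[OF dr])
  have pc: "p_lam \<mu> act l c m = complex_of_real (R l m)" for l m unfolding R_def by (rule pl_real[OF cr])
  have Pmono: "P l m \<le> P l' m" if "l \<in> Bset" "l' \<in> Bset" "\<forall>x. l x \<le> l' x" for l l' m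
    unfolding P_def using iD[OF that(1)] iD[OF that(2)] that(3) le
    by (intro integral_mono) (auto intro: mult_right_mono)
  have Qmono: "Q l m \<le> Q l' m" if "l \<in> Bset" "l' \<in> Bset" "\<forall>x. l x \<le> l' x" for l l' m
    unfolding Q_def using iE[OF that(1)] iE[OF that(2)] that(3) le
    by (intro integral_mono) (auto intro: mult_right_mono simp: Er_def)
  have Pnn: "0 \<le> P l m" if "l \<in> Bset" for l m
    unfolding P_def using that le unfolding Bset_def by (intro Bochner_Integration.integral_nonneg) auto
  have Qnn: "0 \<le> Q l m" if "l \<in> Bset" for l m
    unfolding Q_def using that le unfolding Bset_def Er_def by (intro Bochner_Integration.integral_nonneg) auto
  have Rmono: "R l m \<le> R l' m" if "l \<in> Bset" "l' \<in> Bset" "\<forall>x. l x \<le> l' x" for l l' m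
    using RPQ[OF that(1), where m=m] RPQ[OF that(2), where m=m] Pmono[OF that, where m=m] Qmono[OF that, where m=m] by linarith
  have Rle: "R l m \<le> Re (hc m)" if lB: "l \<in> Bset" for l m
  proof (rule ccontr)
    assume "\<not> R l m \<le> Re (hc m)"
    then have gt: "0 < (R l m - Re (hc m)) / 2" by simp
    obtain l0 where l0: "l0 \<in> Bset" "\<forall>k\<in>Bset. (\<forall>x. l0 x \<le> k x) \<longrightarrow> norm (p_lam \<mu> act k c m - hc m) \<le> (R l m - Re (hc m)) / 2"
      using sc_pointwise[OF LC sc gt] by blast
    define l' where "l' = (\<lambda>x. max (l x) (l0 x))"
    have l'B: "l' \<in> Bset" unfolding l'_def by (rule Bset_max[OF lB l0(1)])
    have "norm (p_lam \<mu> act l' c m - hc m) \<le> (R l m - Re (hc m)) / 2" using l0(2) l'B unfolding l'_def by auto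
    moreover have "\<bar>Re (p_lam \<mu> act l' c m - hc m)\<bar> \<le> norm (p_lam \<mu> act l' c m - hc m)" by (rule abs_Re_le_cmod)
    moreover have "Re (p_lam \<mu> act l' c m - hc m) = R l' m - Re (hc m)" using pc by simp
    ultimately have f1: "R l' m - Re (hc m) \<le> (R l m - Re (hc m)) / 2" by (metis abs_ge_self order_trans)
    have f2: "R l m \<le> R l' m" using Rmono[OF lB l'B] unfolding l'_def by auto
    from f1 f2 gt show False by argo
  qed
  define S where "S = (\<lambda>m. SUP l\<in>Bset. P l m)"
  have bdd: "bdd_above ((\<lambda>l. P l m) ` Bset)" for m
  proof (rule bdd_aboveI2)
    fix l :: "'g \<Rightarrow> real" assume lB: "l \<in> Bset"
    show "P l m \<le> Re (hc m)" using Rle[OF lB, where m=m] RPQ[OF lB, where m=m] Qnn[OF lB, where m=m] by linarith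
  qed
  have PleS: "P l m \<le> S m" if "l \<in> Bset" for l m unfolding S_def by (rule cSUP_upper[OF that bdd])
  have Sle: "S m \<le> Re (hc m) - Q l m" if lB: "l \<in> Bset" for l m
    unfolding S_def
  proof (rule cSUP_least[OF Bset_nonempty])
    fix l' :: "'g \<Rightarrow> real" assume l'B: "l' \<in> Bset"
    define l'' where "l'' = (\<lambda>x. max (l x) (l' x))"
    have l''B: "l'' \<in> Bset" unfolding l''_def by (rule Bset_max[OF lB l'B])
    have "P l' m \<le> P l'' m" using Pmono[OF l'B l''B] unfolding l''_def by auto
    moreover have "Q l m \<le> Q l'' m" using Qmono[OF lB l''B] unfolding l''_def by auto
    moreover have "R l'' m \<le> Re (hc m)" by (rule Rle[OF l''B])
    ultimately show "P l' m \<le> Re (hc m) - Q l m" using RPQ[OF l''B, where m=m] by linarith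
  qed
  define hd where "hd = (\<lambda>m. complex_of_real (S m))"
  have key: "norm (p_lam \<mu> act l d m - hd m) \<le> norm (p_lam \<mu> act l c m - hc m)" if lB: "l \<in> Bset" for l m
  proof -
    have "norm (p_lam \<mu> act l d m - hd m) = \<bar>P l m - S m\<bar>" unfolding hd_def pd
      by (metis norm_of_real of_real_diff)
    also have "\<dots> \<le> Re (hc m) - R l m" using PleS[OF lB, where m=m] Sle[OF lB, where m=m] RPQ[OF lB, where m=m] by linarith
    also have "\<dots> \<le> \<bar>Re (p_lam \<mu> act l c m - hc m)\<bar>" using pc by simp
    also have "\<dots> \<le> norm (p_lam \<mu> act l c m - hc m)" by (rule abs_Re_le_cmod)
    finally show ?thesis .
  qed
  have scd: "strict_conv (\<lambda>l. p_lam \<mu> act l d) hd"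
    unfolding strict_conv_def
  proof (intro ballI allI impI)
    fix a :: "'m \<Rightarrow> complex" and e :: real assume a: "a \<in> C0" and e: "0 < e"
    obtain l0 where l0: "l0 \<in> Bset" "\<forall>l\<in>Bset. (\<forall>x. l0 x \<le> l x) \<longrightarrow> (\<forall>m. norm ((p_lam \<mu> act l c m - hc m) * a m) \<le> e)"
      using sc a e unfolding strict_conv_def by blast
    have "\<forall>l\<in>Bset. (\<forall>x. l0 x \<le> l x) \<longrightarrow> (\<forall>m. norm ((p_lam \<mu> act l d m - hd m) * a m) \<le> e)"
    proof (intro ballI impI allI)
      fix l :: "'g \<Rightarrow> real" and m assume lB: "l \<in> Bset" and ge: "\<forall>x. l0 x \<le> l x"
      have "norm ((p_lam \<mu> act l d m - hd m) * a m) = norm (p_lam \<mu> act l d m - hd m) * norm (a m)" by (simp add: norm_mult)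
      also have "\<dots> \<le> norm (p_lam \<mu> act l c m - hc m) * norm (a m)" using key[OF lB] by (intro mult_right_mono) auto
      also have "\<dots> = norm ((p_lam \<mu> act l c m - hc m) * a m)" by (simp add: norm_mult)
      also have "\<dots> \<le> e" using l0(2) lB ge by blast
      finally show "norm ((p_lam \<mu> act l d m - hd m) * a m) \<le> e" .
    qed
    then show "\<exists>l0\<in>Bset. \<forall>l\<in>Bset. (\<forall>x. l0 x \<le> l x) \<longrightarrow> (\<forall>m. norm ((p_lam \<mu> act l d m - hd m) * a m) \<le> e)"
      using l0(1) by blast
  qed
  obtain Bh where Bh: "\<forall>m. norm (hc m) \<le> Bh" using hcb unfolding Cb_def by blast
  have hdbd: "norm (hd m) \<le> Bh" for m
  proof -
    have "0 \<le> S m" using PleS[OF Bset_zero, where m=m] Pnn[OF Bset_zero, where m=m] by linarith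
    moreover have "S m \<le> Re (hc m)" using Sle[OF Bset_zero, where m=m] Qnn[OF Bset_zero, where m=m] by linarith
    moreover have "Re (hc m) \<le> Bh" using Bh[rule_format, of m] abs_Re_le_cmod[of "hc m"] abs_ge_self[of "Re (hc m)"] by linarith
    ultimately show ?thesis unfolding hd_def by simp
  qed
  have cont: "continuous_on UNIV hd"
  proof (rule cont_crit)
    fix m0 :: 'm and e :: real assume e: "0 < e"
    define e' where "e' = e / 6"
    have e': "0 < e'" unfolding e'_def using e by simp
    obtain a where a: "a \<in> C0" "a m0 = 1" using bump[OF LC] by blast
    have caa: "continuous_on UNIV a" using a(1) unfolding C0_iff by blast
    define W where "W = a -` ball 1 (1/2)"
    have oW: "open W" unfolding W_def by (rule open_vimage[OF open_ball caa])
    have m0W: "m0 \<in> W" unfolding W_def using a(2) by simp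
    have aW: "1/2 \<le> norm (a m)" if "m \<in> W" for m
    proof -
      have "dist 1 (a m) < 1/2" using that unfolding W_def by simp
      then have "norm (1 - a m) < 1/2" by (simp add: dist_norm)
      moreover have "norm (1::complex) \<le> norm (1 - a m) + norm (a m)" by (metis norm_triangle_ineq diff_add_cancel)
      ultimately show ?thesis by simp
    qed
    obtain l1 where l1: "l1 \<in> Bset" "\<forall>l\<in>Bset. (\<forall>x. l1 x \<le> l x) \<longrightarrow> (\<forall>m. norm ((p_lam \<mu> act l c m - hc m) * a m) \<le> e')"
      using sc a(1) e' unfolding strict_conv_def by blast
    have close: "norm (hd m - p_lam \<mu> act l1 d m) \<le> 2 * e'" if "m \<in> W" for m
    proof -
      have n1: "norm (p_lam \<mu> act l1 c m - hc m) * norm (a m) \<le> e'" using l1 by (simp add: norm_mult)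
      have n2: "norm (p_lam \<mu> act l1 c m - hc m) * (1/2) \<le> norm (p_lam \<mu> act l1 c m - hc m) * norm (a m)"
        using aW[OF that] by (intro mult_left_mono) auto
      have n3: "norm (p_lam \<mu> act l1 d m - hd m) \<le> norm (p_lam \<mu> act l1 c m - hc m)" by (rule key[OF l1(1)])
      have n4: "norm (hd m - p_lam \<mu> act l1 d m) = norm (p_lam \<mu> act l1 d m - hd m)" by (rule norm_minus_commute)
      show ?thesis using n1 n2 n3 n4 by linarith
    qed
    obtain Bdd where Bdd: "\<forall>m. norm (d m) \<le> Bdd" using C0_bounded[OF dC] by blast
    have cp: "continuous_on UNIV (p_lam \<mu> act l1 d)"
      by (rule pl_cont[OF lhm ca l1(1) _ Bdd]) (use dC in \<open>simp add: C0_iff\<close>)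
    define W' where "W' = (p_lam \<mu> act l1 d) -` ball (p_lam \<mu> act l1 d m0) e'"
    have oW': "open W'" unfolding W'_def by (rule open_vimage[OF open_ball cp])
    have m0W': "m0 \<in> W'" unfolding W'_def using e' by simp
    have "\<forall>m\<in>W \<inter> W'. dist (hd m) (hd m0) < e"
    proof
      fix m assume m: "m \<in> W \<inter> W'"
      have 1: "norm (hd m - p_lam \<mu> act l1 d m) \<le> 2 * e'" using close m by blast
      have 2: "norm (hd m0 - p_lam \<mu> act l1 d m0) \<le> 2 * e'" using close m0W by blast
      have 3: "norm (p_lam \<mu> act l1 d m - p_lam \<mu> act l1 d m0) < e'" using m unfolding W'_def by (simp add: dist_norm norm_minus_commute)
      have "hd m - hd m0 = (hd m - p_lam \<mu> act l1 d m) + (p_lam \<mu> act l1 d m - p_lam \<mu> act l1 d m0) - (hd m0 - p_lam \<mu> act l1 d m0)"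
        by simp
      moreover have "norm ((hd m - p_lam \<mu> act l1 d m) + (p_lam \<mu> act l1 d m - p_lam \<mu> act l1 d m0) - (hd m0 - p_lam \<mu> act l1 d m0))
          \<le> norm ((hd m - p_lam \<mu> act l1 d m) + (p_lam \<mu> act l1 d m - p_lam \<mu> act l1 d m0)) + norm (hd m0 - p_lam \<mu> act l1 d m0)"
        by (rule norm_triangle_ineq4)
      moreover have "norm ((hd m - p_lam \<mu> act l1 d m) + (p_lam \<mu> act l1 d m - p_lam \<mu> act l1 d m0))
          \<le> norm (hd m - p_lam \<mu> act l1 d m) + norm (p_lam \<mu> act l1 d m - p_lam \<mu> act l1 d m0)"
        by (rule norm_triangle_ineq)
      ultimately have "norm (hd m - hd m0) \<le> norm (hd m - p_lam \<mu> act l1 d m) + norm (p_lam \<mu> act l1 d m - p_lam \<mu> act l1 d m0) + norm (hd m0 - p_lam \<mu> act l1 d m0)"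
        by simp
      then show "dist (hd m) (hd m0) < e" using 1 2 3 e unfolding e'_def dist_norm by linarith
    qed
    then show "\<exists>S. open S \<and> m0 \<in> S \<and> (\<forall>m\<in>S. dist (hd m) (hd m0) < e)"
      using oW oW' m0W m0W' by (intro exI[of _ "W \<inter> W'"]) auto
  qed
  have "hd \<in> Cb" unfolding Cb_def using cont hdbd by blast
  then show ?thesis using scd by blast
qed


lemma haar_distr:
  fixes \<mu> :: "'g::{topological_group_add,t2_space} measure"
  assumes lhm: "left_haar_measure \<mu>"
  shows "distr \<mu> \<mu> (\<lambda>x. y + x) = \<mu>" and "(\<lambda>x. y + x) \<in> measurable \<mu> \<mu>"
proof -
  have S: "sets \<mu> = sets borel" by (rule haar_sets[OF lhm])
  have c: "continuous_on UNIV (\<lambda>x::'g. y + x)" by (intro continuous_on_add continuous_on_const continuous_on_id)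
  show T: "(\<lambda>x. y + x) \<in> measurable \<mu> \<mu>"
    using borel_measurable_continuous_onI[OF c] measurable_cong_sets[OF S S] by blast
  have sp: "space \<mu> = UNIV" using sets_eq_imp_space_eq[OF S] by simp
  show "distr \<mu> \<mu> (\<lambda>x. y + x) = \<mu>"
  proof (rule measure_eqI)
    show "sets (distr \<mu> \<mu> (\<lambda>x. y + x)) = sets \<mu>" by simp
  next
    fix A assume "A \<in> sets (distr \<mu> \<mu> (\<lambda>x. y + x))"
    then have A: "A \<in> sets \<mu>" by simp
    have pre: "(\<lambda>x. y + x) -` A \<inter> space \<mu> = (\<lambda>w. -y + w) ` A"
    proof (rule set_eqI)
      fix z
      show "z \<in> (\<lambda>x. y + x) -` A \<inter> space \<mu> \<longleftrightarrow> z \<in> (\<lambda>w. -y + w) ` A"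
      proof
        assume "z \<in> (\<lambda>x. y + x) -` A \<inter> space \<mu>"
        then have "y + z \<in> A" by simp
        moreover have "z = -y + (y + z)" by (simp add: add.assoc[symmetric])
        ultimately show "z \<in> (\<lambda>w. -y + w) ` A" by blast
      next
        assume "z \<in> (\<lambda>w. -y + w) ` A"
        then obtain w where "w \<in> A" "z = -y + w" by blast
        then show "z \<in> (\<lambda>x. y + x) -` A \<inter> space \<mu>" using sp by (simp add: add.assoc[symmetric])
      qed
    qed
    have "emeasure (distr \<mu> \<mu> (\<lambda>x. y + x)) A = emeasure \<mu> ((\<lambda>x. y + x) -` A \<inter> space \<mu>)"
      by (rule emeasure_distr[OF T A])
    also have "\<dots> = emeasure \<mu> ((\<lambda>w. -y + w) ` A)" using pre by simp
    also have "\<dots> = emeasure \<mu> A" using haar_inv[OF lhm] A S by simp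
    finally show "emeasure (distr \<mu> \<mu> (\<lambda>x. y + x)) A = emeasure \<mu> A" .
  qed
qed

lemma haar_integral_shift:
  fixes \<mu> :: "'g::{topological_group_add,t2_space} measure" and F :: "'g \<Rightarrow> complex"
  assumes lhm: "left_haar_measure \<mu>" and Fm: "F \<in> borel_measurable borel"
  shows "(LINT x|\<mu>. F (y + x)) = (LINT z|\<mu>. F z)"
proof -
  have S: "sets \<mu> = sets borel" by (rule haar_sets[OF lhm])
  have Fm': "F \<in> borel_measurable \<mu>" using Fm measurable_cong_sets[OF S refl] by blast
  have "(LINT z|\<mu>. F z) = (LINT z|distr \<mu> \<mu> (\<lambda>x. y + x). F z)" using haar_distr(1)[OF lhm] by simp
  also have "\<dots> = (LINT x|\<mu>. F (y + x))" by (rule integral_distr[OF haar_distr(2)[OF lhm] Fm'])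
  finally show ?thesis by simp
qed

lemma pl_shift:
  fixes \<mu> :: "'g::{topological_group_add,t2_space} measure" and act :: "'g \<Rightarrow> 'm::t2_space \<Rightarrow> 'm"
  assumes lhm: "left_haar_measure \<mu>" and ca: "continuous_action act" and lB: "l \<in> Bset"
    and cu: "continuous_on UNIV u"
  shows "p_lam \<mu> act l u (act (- y) m) = p_lam \<mu> act (\<lambda>z. l (- y + z)) u m"
proof -
  have act_add: "act (x + z) m' = act x (act z m')" for x z m' using ca unfolding continuous_action_def by blast
  have lm: "l \<in> borel_measurable borel" using lB unfolding Bset_def by blast
  define F where "F = (\<lambda>z. complex_of_real (l (- y + z)) * u (act (- z) m))"
  have c1: "continuous_on UNIV (\<lambda>z::'g. - y + z)" by (intro continuous_on_add continuous_on_const continuous_on_id)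
  have m1: "(\<lambda>z. l (- y + z)) \<in> borel_measurable borel"
    by (rule measurable_compose[OF borel_measurable_continuous_onI[OF c1] lm])
  have m2: "(\<lambda>z. u (act (- z) m)) \<in> borel_measurable borel"
    by (rule borel_measurable_continuous_onI[OF act_cont_m[OF ca cu]])
  have Fm: "F \<in> borel_measurable borel" unfolding F_def using m1 m2
    by (intro borel_measurable_times measurable_compose[OF m1 borel_measurable_of_real])
  have eq: "F (y + x) = complex_of_real (l x) * u (act (- x) (act (- y) m))" for x
  proof -
    have "act (- (y + x)) m = act (- x + - y) m" by (simp only: minus_add)
    also have "\<dots> = act (- x) (act (- y) m)" by (rule act_add)
    finally have "act (- (y + x)) m = act (- x) (act (- y) m)" .
    moreover have "- y + (y + x) = x" by (simp add: add.assoc[symmetric])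
    ultimately show ?thesis unfolding F_def by simp
  qed
  have "p_lam \<mu> act l u (act (- y) m) = (LINT x|\<mu>. F (y + x))"
    unfolding p_lam_def alpha_def eq by simp
  also have "\<dots> = (LINT z|\<mu>. F z)" by (rule haar_integral_shift[OF lhm Fm])
  also have "\<dots> = p_lam \<mu> act (\<lambda>z. l (- y + z)) u m" unfolding p_lam_def alpha_def F_def by simp
  finally show ?thesis .
qed

lemma inv_limit:
  fixes \<mu> :: "'g::{topological_group_add,t2_space} measure" and act :: "'g \<Rightarrow> 'm::t2_space \<Rightarrow> 'm"
  assumes lhm: "left_haar_measure \<mu>" and ca: "continuous_action act"
    and LC: "locally_compact_space (euclidean :: 'm topology)"
    and uC: "u \<in> C0" and sc: "strict_conv (\<lambda>l. p_lam \<mu> act l u) h"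
  shows "h (act (- y) m) = h m"
proof -
  have cu: "continuous_on UNIV u" using uC unfolding C0_iff by blast
  have *: "norm (h (act (- y) m) - h m) \<le> 2 * e" if e: "0 < e" for e
  proof -
    obtain l1 where l1: "l1 \<in> Bset" "\<forall>k\<in>Bset. (\<forall>x. l1 x \<le> k x) \<longrightarrow> norm (p_lam \<mu> act k u (act (- y) m) - h (act (- y) m)) \<le> e"
      using sc_pointwise[OF LC sc e] by blast
    obtain l2 where l2: "l2 \<in> Bset" "\<forall>k\<in>Bset. (\<forall>x. l2 x \<le> k x) \<longrightarrow> norm (p_lam \<mu> act k u m - h m) \<le> e"
      using sc_pointwise[OF LC sc e] by blast
    define L where "L = (\<lambda>x. max (l1 x) (l2 x))"
    have LB: "L \<in> Bset" unfolding L_def by (rule Bset_max[OF l1(1) l2(1)])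
    define l where "l = (\<lambda>x. max (L x) (L (y + x)))"
    have lB: "l \<in> Bset" unfolding l_def by (rule Bset_max[OF LB Bset_shift[OF LB]])
    define tl where "tl = (\<lambda>z. l (- y + z))"
    have tlB: "tl \<in> Bset" unfolding tl_def by (rule Bset_shift[OF lB])
    have ge1: "\<forall>x. l1 x \<le> l x" unfolding l_def L_def by (auto simp: le_max_iff_disj)
    have ge2: "\<forall>x. l2 x \<le> tl x"
    proof
      fix x
      have "y + (- y + x) = x" by (simp add: add.assoc[symmetric])
      then have "L x \<le> tl x" unfolding tl_def l_def by simp
      then show "l2 x \<le> tl x" unfolding L_def by simp
    qed
    have a: "norm (p_lam \<mu> act l u (act (- y) m) - h (act (- y) m)) \<le> e" using l1(2) lB ge1 by blast
    have b: "norm (p_lam \<mu> act tl u m - h m) \<le> e" using l2(2) tlB ge2 by blast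
    have eq: "p_lam \<mu> act l u (act (- y) m) = p_lam \<mu> act tl u m"
      unfolding tl_def by (rule pl_shift[OF lhm ca lB cu])
    have "h (act (- y) m) - h m = (p_lam \<mu> act tl u m - h m) - (p_lam \<mu> act l u (act (- y) m) - h (act (- y) m))"
      using eq by simp
    then have "norm (h (act (- y) m) - h m) \<le> norm (p_lam \<mu> act tl u m - h m) + norm (p_lam \<mu> act l u (act (- y) m) - h (act (- y) m))"
      using norm_triangle_ineq4 by metis
    then show ?thesis using a b by linarith
  qed
  show ?thesis
  proof (rule ccontr)
    assume "h (act (- y) m) \<noteq> h m"
    then have d: "0 < norm (h (act (- y) m) - h m)" by simp
    have "norm (h (act (- y) m) - h m) \<le> 2 * (norm (h (act (- y) m) - h m) / 4)" using d by (intro *) auto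
    then show False using d by simp
  qed
qed


definition VI :: "('g \<Rightarrow> 'm \<Rightarrow> 'm) \<Rightarrow> ('m::topological_space \<Rightarrow> complex) \<Rightarrow> bool" where
  "VI act h \<longleftrightarrow> (\<forall>e>0. \<exists>S. compact S \<and> (\<forall>m. (\<forall>x. act x m \<notin> S) \<longrightarrow> norm (h m) < e))"

lemma VI_lin:
  assumes "VI act h1" "VI act h2" shows "VI act (\<lambda>m. c * h1 m + h2 m)"
  unfolding VI_def
proof (intro allI impI)
  fix e :: real assume e: "0 < e"
  define e1 where "e1 = e / (2 * (norm c + 1))"
  have e1: "0 < e1" unfolding e1_def using e add_nonneg_pos[OF norm_ge_zero[of c] zero_less_one] by (intro divide_pos_pos mult_pos_pos) auto
  obtain S1 where S1: "compact S1" "\<forall>m. (\<forall>x. act x m \<notin> S1) \<longrightarrow> norm (h1 m) < e1" using assms(1) e1 unfolding VI_def by blast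
  obtain S2 where S2: "compact S2" "\<forall>m. (\<forall>x. act x m \<notin> S2) \<longrightarrow> norm (h2 m) < e / 2" using assms(2) e unfolding VI_def
    by (meson half_gt_zero)
  have "norm (c * h1 m + h2 m) < e" if "\<forall>x. act x m \<notin> S1 \<union> S2" for m
  proof -
    have a: "norm (h1 m) < e1" using S1(2) that by blast
    have b: "norm (h2 m) < e / 2" using S2(2) that by blast
    have "norm (c * h1 m + h2 m) \<le> norm c * norm (h1 m) + norm (h2 m)" by (metis norm_mult norm_triangle_ineq)
    also have "norm c * norm (h1 m) \<le> norm c * e1" using a by (intro mult_left_mono) auto
    also have "norm c * e1 \<le> e / 2" unfolding e1_def using scal_bound[OF e norm_ge_zero[of c]] .
    finally show ?thesis using b by linarith
  qed
  then show "\<exists>S. compact S \<and> (\<forall>m. (\<forall>x. act x m \<notin> S) \<longrightarrow> norm (c * h1 m + h2 m) < e)"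
    using S1(1) S2(1) by (intro exI[of _ "S1 \<union> S2"]) auto
qed

lemma VI_zero: "VI act (\<lambda>m. 0)" unfolding VI_def by (auto intro!: exI[of _ "{}"])

definition good :: "'g::{topological_group_add,t2_space} measure \<Rightarrow> ('g \<Rightarrow> 'm \<Rightarrow> 'm) \<Rightarrow> ('m::topological_space \<Rightarrow> complex) \<Rightarrow> bool" where
  "good \<mu> act u \<longleftrightarrow> u \<in> C0 \<and> (\<exists>h\<in>Cb. strict_conv (\<lambda>l. p_lam \<mu> act l u) h \<and> VI act h)"

lemma good_lin:
  fixes \<mu> :: "'g::{topological_group_add,t2_space} measure" and act :: "'g \<Rightarrow> 'm::t2_space \<Rightarrow> 'm"
  assumes lhm: "left_haar_measure \<mu>" and ca: "continuous_action act"
    and gu: "good \<mu> act u" and gv: "good \<mu> act v"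
  shows "good \<mu> act (\<lambda>m. c * u m + v m)"
proof -
  have uC: "u \<in> C0" and vC: "v \<in> C0" using gu gv unfolding good_def by auto
  obtain h1 where h1: "h1 \<in> Cb" "strict_conv (\<lambda>l. p_lam \<mu> act l u) h1" "VI act h1" using gu unfolding good_def by blast
  obtain h2 where h2: "h2 \<in> Cb" "strict_conv (\<lambda>l. p_lam \<mu> act l v) h2" "VI act h2" using gv unfolding good_def by blast
  obtain B1 where B1: "\<forall>m. norm (u m) \<le> B1" using C0_bounded[OF uC] by blast
  obtain B2 where B2: "\<forall>m. norm (v m) \<le> B2" using C0_bounded[OF vC] by blast
  have cu: "continuous_on UNIV u" using uC unfolding C0_iff by blast
  have cv: "continuous_on UNIV v" using vC unfolding C0_iff by blast
  have sc: "strict_conv (\<lambda>l m. c * p_lam \<mu> act l u m + p_lam \<mu> act l v m) (\<lambda>m. c * h1 m + h2 m)"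
    by (rule sc_lin[OF h1(2) h2(2)])
  have "strict_conv (\<lambda>l. p_lam \<mu> act l (\<lambda>m. c * u m + v m)) (\<lambda>m. c * h1 m + h2 m)"
    using sc sc_cong[of "\<lambda>l. p_lam \<mu> act l (\<lambda>m. c * u m + v m)" "\<lambda>l m. c * p_lam \<mu> act l u m + p_lam \<mu> act l v m"]
      pl_lin[OF lhm ca _ cu B1 cv B2] by blast
  then show ?thesis unfolding good_def
    using C0_lin[OF uC vC] Cb_lin[OF h1(1) h2(1)] VI_lin[OF h1(3) h2(3)] by blast
qed

lemma good_zero: "good \<mu> act (\<lambda>m. 0)"
proof -
  have "p_lam \<mu> act l (\<lambda>m. 0) = (\<lambda>m. 0)" for l unfolding p_lam_def alpha_def by simp
  then have "strict_conv (\<lambda>l. p_lam \<mu> act l (\<lambda>m. 0)) (\<lambda>m. 0)"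
    unfolding strict_conv_def using Bset_zero by auto
  then show ?thesis unfolding good_def using C0_zero Cb_zero VI_zero by blast
qed

lemma good_scale:
  fixes \<mu> :: "'g::{topological_group_add,t2_space} measure" and act :: "'g \<Rightarrow> 'm::t2_space \<Rightarrow> 'm"
  assumes lhm: "left_haar_measure \<mu>" and ca: "continuous_action act" and gu: "good \<mu> act u"
  shows "good \<mu> act (\<lambda>m. c * u m)"
  using good_lin[OF lhm ca gu good_zero, of c] by simp

lemma good_sum:
  fixes n :: nat and \<mu> :: "'g::{topological_group_add,t2_space} measure" and act :: "'g \<Rightarrow> 'm::t2_space \<Rightarrow> 'm"
  assumes lhm: "left_haar_measure \<mu>" and ca: "continuous_action act"
  shows "(\<forall>i<n. good \<mu> act (F i)) \<Longrightarrow> good \<mu> act (\<lambda>m. \<Sum>i<n. F i m)"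
proof (induction n)
  case 0 then show ?case using good_zero by simp
next
  case (Suc n)
  have g1: "good \<mu> act (\<lambda>m. \<Sum>i<n. F i m)" using Suc by simp
  have g2: "good \<mu> act (F n)" using Suc.prems by simp
  have "good \<mu> act (\<lambda>m. 1 * F n m + (\<Sum>i<n. F i m))" by (rule good_lin[OF lhm ca g2 g1])
  then show ?case by (simp add: add.commute)
qed

lemma pl_scale: "p_lam \<mu> act l (\<lambda>m. k * u m) m = k * p_lam \<mu> act l u m"
proof -
  have "(\<lambda>x. complex_of_real (l x) * (k * u (act (- x) m))) = (\<lambda>x. k * (complex_of_real (l x) * u (act (- x) m)))"
    by (auto simp: algebra_simps)
  then show ?thesis unfolding p_lam_def alpha_def by simp
qed

lemma sc_scale:
  fixes n :: "('g::topological_space \<Rightarrow> real) \<Rightarrow> 'm::topological_space \<Rightarrow> complex"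
  assumes "strict_conv n h" shows "strict_conv (\<lambda>l m. k * n l m) (\<lambda>m. k * h m)"
proof -
  have z: "strict_conv (\<lambda>l (m::'m). 0::complex) (\<lambda>m. 0)" unfolding strict_conv_def using Bset_zero by auto
  show ?thesis using sc_lin[OF assms z, of k] by simp
qed

lemma real_of_proper:
  assumes "\<forall>m. a m \<in> \<real> \<and> Re (a m) \<ge> 0"
  shows "\<forall>m. a m = complex_of_real (Re (a m))"
  using assms by (metis Reals_cases Re_complex_of_real)

lemma prod_good:
  fixes \<mu> :: "'g::{topological_group_add,t2_space} measure" and act :: "'g \<Rightarrow> 'm::t2_space \<Rightarrow> 'm"
  assumes lhm: "left_haar_measure \<mu>" and ca: "continuous_action act"
    and LC: "locally_compact_space (euclidean :: 'm topology)"
    and pa: "alpha_proper_elt \<mu> act a" and pb: "alpha_proper_elt \<mu> act b"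
  shows "good \<mu> act (\<lambda>m. a m * b m)"
proof -
  have aC: "a \<in> C0" and ar: "\<forall>m. a m \<in> \<real> \<and> Re (a m) \<ge> 0" using pa unfolding alpha_proper_elt_def by auto
  have bC: "b \<in> C0" and br: "\<forall>m. b m \<in> \<real> \<and> Re (b m) \<ge> 0" using pb unfolding alpha_proper_elt_def by auto
  obtain ha where ha: "ha \<in> Cb" "strict_conv (\<lambda>l. p_lam \<mu> act l a) ha" using pa unfolding alpha_proper_elt_def by blast
  obtain hb where hb: "hb \<in> Cb" "strict_conv (\<lambda>l. p_lam \<mu> act l b) hb" using pb unfolding alpha_proper_elt_def by blast
  define Ar where "Ar = (\<lambda>m. Re (a m))"
  define Br where "Br = (\<lambda>m. Re (b m))"
  have ae: "\<forall>m. a m = complex_of_real (Ar m)" unfolding Ar_def by (rule real_of_proper[OF ar])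
  have be: "\<forall>m. b m = complex_of_real (Br m)" unfolding Br_def by (rule real_of_proper[OF br])
  have Ar0: "\<forall>m. 0 \<le> Ar m" using ar unfolding Ar_def by blast
  have Br0: "\<forall>m. 0 \<le> Br m" using br unfolding Br_def by blast
  obtain Bb where Bb: "\<forall>m. norm (b m) \<le> Bb" using C0_bounded[OF bC] by blast
  have BrB: "\<forall>m. Br m \<le> Bb" using Bb be by (metis abs_le_D1 norm_of_real)
  define c where "c = (\<lambda>m. complex_of_real Bb * a m)"
  define d where "d = (\<lambda>m. a m * b m)"
  have cC: "c \<in> C0" unfolding c_def using C0_lin[OF aC C0_zero, of "complex_of_real Bb"] by simp
  have dC: "d \<in> C0" unfolding d_def by (rule C0_mult[OF aC bC])
  have ce: "\<forall>m. c m = complex_of_real (Bb * Ar m)" unfolding c_def using ae by simp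
  have de: "\<forall>m. d m = complex_of_real (Ar m * Br m)" unfolding d_def using ae be by simp
  have le: "\<forall>m. 0 \<le> Ar m * Br m \<and> Ar m * Br m \<le> Bb * Ar m"
  proof
    fix m
    have "Ar m * Br m \<le> Ar m * Bb" using Ar0 BrB by (intro mult_left_mono) auto
    then show "0 \<le> Ar m * Br m \<and> Ar m * Br m \<le> Bb * Ar m" using Ar0 Br0 by (simp add: mult.commute)
  qed
  have scc: "strict_conv (\<lambda>l. p_lam \<mu> act l c) (\<lambda>m. complex_of_real Bb * ha m)"
  proof -
    have "strict_conv (\<lambda>l m. complex_of_real Bb * p_lam \<mu> act l a m) (\<lambda>m. complex_of_real Bb * ha m)"
      by (rule sc_scale[OF ha(2)])
    moreover have "p_lam \<mu> act l c = (\<lambda>m. complex_of_real Bb * p_lam \<mu> act l a m)" for l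
      unfolding c_def by (rule ext, rule pl_scale)
    ultimately show ?thesis by simp
  qed
  have hcb: "(\<lambda>m. complex_of_real Bb * ha m) \<in> Cb" using Cb_lin[OF ha(1) Cb_zero, of "complex_of_real Bb"] by simp
  obtain hd where hd: "hd \<in> Cb" "strict_conv (\<lambda>l. p_lam \<mu> act l d) hd"
    using hered[OF lhm ca LC cC dC ce de le scc hcb] by blast
  obtain Bh where Bh: "\<forall>m. norm (hb m) \<le> Bh" using hb(1) unfolding Cb_def by blast
  define Bh' where "Bh' = max Bh 0"
  have Bh': "\<forall>m. norm (hb m) \<le> Bh'" "0 \<le> Bh'" using Bh unfolding Bh'_def by (auto simp: le_max_iff_disj)
  have cAr: "continuous_on UNIV Ar" using real_fun_props(1)[OF aC ae] .
  have cBr: "continuous_on UNIV Br" using real_fun_props(1)[OF bC be] .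
  obtain BA where BA: "\<forall>m. \<bar>Ar m\<bar> \<le> BA" using real_fun_props(2)[OF aC ae] by blast
  obtain BB where BB: "\<forall>m. \<bar>Br m\<bar> \<le> BB" using real_fun_props(2)[OF bC be] by blast
  have "VI act hd"
    unfolding VI_def
  proof (intro allI impI)
    fix e :: real assume e: "0 < e"
    define \<delta> where "\<delta> = e / (2 * (Bh' + 1))"
    have \<delta>: "0 < \<delta>" unfolding \<delta>_def using e Bh'(2) by (intro divide_pos_pos mult_pos_pos) auto
    have \<delta>B: "Bh' * \<delta> \<le> e / 2" unfolding \<delta>_def by (rule scal_bound[OF e Bh'(2)])
    obtain K where K: "compact K" "\<forall>y. y \<notin> K \<longrightarrow> norm (a y) < \<delta>" using aC \<delta> unfolding C0_iff by blast
    define S where "S = {m. \<delta> \<le> Ar m}"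
    have clS: "closed S" unfolding S_def by (intro closed_Collect_le continuous_on_const cAr)
    have SK: "S \<subseteq> K"
    proof
      fix m assume "m \<in> S"
      then have "\<delta> \<le> norm (a m)" unfolding S_def using ae Ar0 by simp
      then show "m \<in> K" using K(2) by force
    qed
    have cS: "compact S" using compact_Int_closed[OF K(1) clS] SK by (simp add: Int_absorb1)
    have "norm (hd m) < e" if nm: "\<forall>x. act x m \<notin> S" for m
    proof -
      define \<epsilon> where "\<epsilon> = e / (4 * (\<delta> + 1))"
      have \<epsilon>: "0 < \<epsilon>" unfolding \<epsilon>_def using e \<delta> by (intro divide_pos_pos mult_pos_pos) auto
      have \<epsilon>e: "(\<delta> + 1) * \<epsilon> = e / 4" unfolding \<epsilon>_def using \<delta> by (simp add: field_simps)
      obtain l1 where l1: "l1 \<in> Bset" "\<forall>k\<in>Bset. (\<forall>x. l1 x \<le> k x) \<longrightarrow> norm (p_lam \<mu> act k d m - hd m) \<le> \<epsilon>"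
        using sc_pointwise[OF LC hd(2) \<epsilon>] by blast
      obtain l2 where l2: "l2 \<in> Bset" "\<forall>k\<in>Bset. (\<forall>x. l2 x \<le> k x) \<longrightarrow> norm (p_lam \<mu> act k b m - hb m) \<le> \<epsilon>"
        using sc_pointwise[OF LC hb(2) \<epsilon>] by blast
      define l where "l = (\<lambda>x. max (l1 x) (l2 x))"
      have lB: "l \<in> Bset" unfolding l_def by (rule Bset_max[OF l1(1) l2(1)])
      have n1: "norm (p_lam \<mu> act l d m - hd m) \<le> \<epsilon>" using l1(2) lB unfolding l_def by auto
      have n2: "norm (p_lam \<mu> act l b m - hb m) \<le> \<epsilon>" using l2(2) lB unfolding l_def by auto
      have lb: "\<forall>x. 0 \<le> l x" using lB unfolding Bset_def by blast
      have cD: "continuous_on UNIV (\<lambda>m. Ar m * Br m)" by (intro continuous_on_mult cAr cBr)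
      have BD: "\<forall>m. \<bar>Ar m * Br m\<bar> \<le> BA * BB" using BA BB by (simp add: abs_mult mult_mono')
      have cdB: "continuous_on UNIV (\<lambda>m. \<delta> * Br m)" by (intro continuous_on_mult continuous_on_const cBr)
      have BdB: "\<forall>m. \<bar>\<delta> * Br m\<bar> \<le> \<delta> * BB" using BB \<delta> by (simp add: abs_mult mult_left_mono)
      have i1: "integrable \<mu> (\<lambda>x. l x * (Ar (act (- x) m) * Br (act (- x) m)))"
        using integ_real[OF lhm ca lB cD BD] by simp
      have i2: "integrable \<mu> (\<lambda>x. l x * (\<delta> * Br (act (- x) m)))"
        using integ_real[OF lhm ca lB cdB BdB] by simp
      have pd: "p_lam \<mu> act l d m = complex_of_real (LINT x|\<mu>. l x * (Ar (act (- x) m) * Br (act (- x) m)))"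
        by (rule pl_real[OF de])
      have pb: "p_lam \<mu> act l b m = complex_of_real (LINT x|\<mu>. l x * Br (act (- x) m))"
        by (rule pl_real[OF be])
      have I1: "(LINT x|\<mu>. l x * (Ar (act (- x) m) * Br (act (- x) m))) \<le> (LINT x|\<mu>. l x * (\<delta> * Br (act (- x) m)))"
      proof (rule integral_mono[OF i1 i2])
        fix x
        have "Ar (act (- x) m) < \<delta>" using nm[rule_format, of "- x"] unfolding S_def by simp
        then have "Ar (act (- x) m) * Br (act (- x) m) \<le> \<delta> * Br (act (- x) m)"
          using Br0 by (intro mult_right_mono) auto
        then show "l x * (Ar (act (- x) m) * Br (act (- x) m)) \<le> l x * (\<delta> * Br (act (- x) m))"
          using lb by (intro mult_left_mono) auto
      qed
      have I0: "0 \<le> (LINT x|\<mu>. l x * (Ar (act (- x) m) * Br (act (- x) m)))"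
        using lb Ar0 Br0 by (intro Bochner_Integration.integral_nonneg) auto
      have I2: "(LINT x|\<mu>. l x * (\<delta> * Br (act (- x) m))) = \<delta> * (LINT x|\<mu>. l x * Br (act (- x) m))"
      proof -
        have "(\<lambda>x. l x * (\<delta> * Br (act (- x) m))) = (\<lambda>x. \<delta> * (l x * Br (act (- x) m)))" by (auto simp: algebra_simps)
        then show ?thesis by simp
      qed
      have I3: "(LINT x|\<mu>. l x * Br (act (- x) m)) \<le> norm (p_lam \<mu> act l b m)"
        unfolding pb by simp
      have pdn: "norm (p_lam \<mu> act l d m) \<le> \<delta> * norm (p_lam \<mu> act l b m)"
      proof -
        have "norm (p_lam \<mu> act l d m) = (LINT x|\<mu>. l x * (Ar (act (- x) m) * Br (act (- x) m)))"
          unfolding pd using I0 by simp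
        also have "\<dots> \<le> \<delta> * (LINT x|\<mu>. l x * Br (act (- x) m))" using I1 I2 by simp
        also have "\<dots> \<le> \<delta> * norm (p_lam \<mu> act l b m)" using I3 \<delta> by (intro mult_left_mono) auto
        finally show ?thesis .
      qed
      have t1: "norm (hd m) \<le> norm (p_lam \<mu> act l d m) + \<epsilon>"
        using n1 norm_triangle_ineq3[of "p_lam \<mu> act l d m" "hd m"] by (metis norm_minus_commute norm_triangle_sub add.commute order_trans add_left_mono)
      have t2: "norm (p_lam \<mu> act l b m) \<le> Bh' + \<epsilon>"
      proof -
        have "norm (p_lam \<mu> act l b m) \<le> norm (p_lam \<mu> act l b m - hb m) + norm (hb m)"
          using norm_triangle_ineq[of "p_lam \<mu> act l b m - hb m" "hb m"] by simp
        then show ?thesis using n2 Bh'(1)[rule_format, of m] by linarith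
      qed
      have t3: "\<delta> * norm (p_lam \<mu> act l b m) \<le> \<delta> * (Bh' + \<epsilon>)" using t2 \<delta> by (intro mult_left_mono) auto
      have "\<delta> * (Bh' + \<epsilon>) + \<epsilon> = Bh' * \<delta> + (\<delta> + 1) * \<epsilon>" by (simp add: algebra_simps)
      then have "norm (hd m) \<le> Bh' * \<delta> + (\<delta> + 1) * \<epsilon>" using t1 pdn t3 by linarith
      then show ?thesis using \<delta>B \<epsilon>e e by linarith
    qed
    then show "\<exists>S. compact S \<and> (\<forall>m. (\<forall>x. act x m \<notin> S) \<longrightarrow> norm (hd m) < e)" using cS by blast
  qed
  then show ?thesis unfolding good_def d_def[symmetric] using dC hd by blast
qed


lemma orbit_space_open:
  "openin (orbit_space act) U \<longleftrightarrow> U \<subseteq> range (orbit act) \<and> open {m. orbit act m \<in> U}"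
proof -
  have 1: "\<forall>S T. (S \<subseteq> range (orbit act) \<and> open {m. orbit act m \<in> S}) \<longrightarrow> (T \<subseteq> range (orbit act) \<and> open {m. orbit act m \<in> T})
      \<longrightarrow> (S \<inter> T \<subseteq> range (orbit act) \<and> open {m. orbit act m \<in> S \<inter> T})"
  proof (intro allI impI)
    fix S T :: "'a set set"
    assume S: "S \<subseteq> range (orbit act) \<and> open {m. orbit act m \<in> S}" and T: "T \<subseteq> range (orbit act) \<and> open {m. orbit act m \<in> T}"
    have "{m. orbit act m \<in> S \<inter> T} = {m. orbit act m \<in> S} \<inter> {m. orbit act m \<in> T}" by auto
    then show "S \<inter> T \<subseteq> range (orbit act) \<and> open {m. orbit act m \<in> S \<inter> T}" using S T by auto
  qed
  have 2: "\<forall>K. (\<forall>S\<in>K. S \<subseteq> range (orbit act) \<and> open {m. orbit act m \<in> S}) \<longrightarrow> (\<Union>K \<subseteq> range (orbit act) \<and> open {m. orbit act m \<in> \<Union>K})"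
  proof (intro allI impI)
    fix K :: "'a set set set"
    assume K: "\<forall>S\<in>K. S \<subseteq> range (orbit act) \<and> open {m. orbit act m \<in> S}"
    have "{m. orbit act m \<in> \<Union>K} = (\<Union>S\<in>K. {m. orbit act m \<in> S})" by auto
    then show "\<Union>K \<subseteq> range (orbit act) \<and> open {m. orbit act m \<in> \<Union>K}" using K by auto
  qed
  have "istopology (\<lambda>U. U \<subseteq> range (orbit act) \<and> open {m. orbit act m \<in> U})"
    unfolding istopology_def using 1 2 by blast
  then show ?thesis unfolding orbit_space_def by (simp add: topology_inverse')
qed

lemma orbit_space_topspace: "topspace (orbit_space act) = range (orbit act)"
proof -
  have "openin (orbit_space act) (range (orbit act))" unfolding orbit_space_open by simp
  then have "range (orbit act) \<subseteq> topspace (orbit_space act)" by (rule openin_subset)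
  moreover have "topspace (orbit_space act) \<subseteq> range (orbit act)"
    using orbit_space_open[of act "topspace (orbit_space act)"] by simp
  ultimately show ?thesis by blast
qed

lemma orbit_act:
  assumes ca: "continuous_action act"
  shows "orbit act (act x m) = orbit act m"
proof -
  have act_add: "act (x + z) m' = act x (act z m')" for x z m' using ca unfolding continuous_action_def by blast
  have "range (\<lambda>z. act z (act x m)) = range (\<lambda>z. act z m)"
  proof (rule set_eqI, rule iffI)
    fix w assume "w \<in> range (\<lambda>z. act z (act x m))"
    then obtain z where "w = act z (act x m)" by blast
    then have "w = act (z + x) m" using act_add by simp
    then show "w \<in> range (\<lambda>z. act z m)" by blast
  next
    fix w assume "w \<in> range (\<lambda>z. act z m)"
    then obtain z where z: "w = act z m" by blast
    have "act (z + - x) (act x m) = act ((z + - x) + x) m" by (rule act_add[symmetric])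
    also have "(z + - x) + x = z" by (simp add: add.assoc)
    finally have "w = act (z + - x) (act x m)" using z by simp
    then show "w \<in> range (\<lambda>z. act z (act x m))" by blast
  qed
  then show ?thesis unfolding orbit_def .
qed

lemma on_orbits_eq:
  assumes ca: "continuous_action act" and inv: "\<forall>y m. h (act y m) = h m"
  shows "on_orbits h (orbit act m) = h m"
proof -
  have "m \<in> orbit act m" unfolding orbit_def using ca unfolding continuous_action_def by (metis rangeI)
  then have "(SOME m'. m' \<in> orbit act m) \<in> orbit act m" by (rule someI)
  then obtain x where "(SOME m'. m' \<in> orbit act m) = act x m" unfolding orbit_def by blast
  then show ?thesis unfolding on_orbits_def using inv by simp
qed

lemma orbit_C0:
  fixes act :: "'g::topological_group_add \<Rightarrow> 'm::t2_space \<Rightarrow> 'm"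
  assumes ca: "continuous_action act" and hC: "h \<in> Cb" and inv: "\<forall>y m. h (act y m) = h m"
    and vi: "VI act h"
  shows "on_orbits h \<in> C0_on (orbit_space act)"
proof -
  have ch: "continuous_on UNIV h" using hC unfolding Cb_def by blast
  have eqo: "on_orbits h (orbit act m) = h m" for m by (rule on_orbits_eq[OF ca inv])
  have cm: "continuous_map (orbit_space act) euclidean (on_orbits h)"
    unfolding continuous_map_def
  proof (intro conjI allI impI)
    show "on_orbits h \<in> topspace (orbit_space act) \<rightarrow> topspace euclidean" by simp
  next
    fix U :: "complex set" assume "openin euclidean U"
    then have oU: "open U" by simp
    have "{m. orbit act m \<in> {x \<in> topspace (orbit_space act). on_orbits h x \<in> U}} = h -` U"
      using eqo by (auto simp: orbit_space_topspace)
    moreover have "open (h -` U)" by (rule open_vimage[OF oU ch])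
    ultimately show "openin (orbit_space act) {x \<in> topspace (orbit_space act). on_orbits h x \<in> U}"
      unfolding orbit_space_open by (auto simp: orbit_space_topspace)
  qed
  have co: "continuous_map euclidean (orbit_space act) (orbit act)"
    unfolding continuous_map_def
  proof (intro conjI allI impI)
    show "orbit act \<in> topspace euclidean \<rightarrow> topspace (orbit_space act)" by (simp add: orbit_space_topspace)
  next
    fix U assume "openin (orbit_space act) U"
    then show "openin euclidean {x \<in> topspace euclidean. orbit act x \<in> U}"
      unfolding orbit_space_open by simp
  qed
  have van: "\<exists>K. compactin (orbit_space act) K \<and> (\<forall>y\<in>topspace (orbit_space act) - K. norm (on_orbits h y) < e)"
    if e: "0 < e" for e
  proof -
    obtain S where S: "compact S" "\<forall>m. (\<forall>x. act x m \<notin> S) \<longrightarrow> norm (h m) < e" using vi e unfolding VI_def by blast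
    have cK: "compactin (orbit_space act) (orbit act ` S)"
      by (rule image_compactin[OF _ co]) (use S(1) in \<open>simp add: compactin_euclidean_iff\<close>)
    have "norm (on_orbits h y) < e" if y: "y \<in> topspace (orbit_space act) - orbit act ` S" for y
    proof -
      obtain m where m: "y = orbit act m" using y by (auto simp: orbit_space_topspace)
      have "\<forall>x. act x m \<notin> S"
      proof (intro allI notI)
        fix x assume "act x m \<in> S"
        then have "orbit act (act x m) \<in> orbit act ` S" by blast
        then show False using y m orbit_act[OF ca] by simp
      qed
      then show ?thesis using S(2) m eqo by simp
    qed
    then show ?thesis using cK by blast
  qed
  show ?thesis unfolding C0_on_def using cm van by blast
qed

theorem proposition6p5:
  fixes \<mu> :: "'g::{topological_group_add,t2_space} measure"
    and act :: "'g \<Rightarrow> 'm::t2_space \<Rightarrow> 'm"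
    and f g :: "'m \<Rightarrow> complex"
  assumes "locally_compact_space (euclidean :: 'g topology)"
    and "left_haar_measure \<mu>"
    and "locally_compact_space (euclidean :: 'm topology)"
    and "continuous_action act"
    and "proper_action \<mu> act"
    and "f \<in> P_alpha \<mu> act" and "g \<in> P_alpha \<mu> act"
  shows "psi_alpha \<mu> act (\<lambda>m. cnj (f m) * g m) \<in> Cb
    \<and> strict_conv (\<lambda>l. p_lam \<mu> act l (\<lambda>m. cnj (f m) * g m)) (psi_alpha \<mu> act (\<lambda>m. cnj (f m) * g m))
    \<and> alpha_invariant act (psi_alpha \<mu> act (\<lambda>m. cnj (f m) * g m))
    \<and> on_orbits (psi_alpha \<mu> act (\<lambda>m. cnj (f m) * g m)) \<in> C0_on (orbit_space act)"
proof -
  note lhm = assms(2) and LC = assms(3) and ca = assms(4)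
  obtain n :: nat and c :: "nat \<Rightarrow> complex" and a :: "nat \<Rightarrow> 'm \<Rightarrow> complex" where fa: "\<forall>i<n. alpha_proper_elt \<mu> act (a i)" and fe: "f = (\<lambda>m. \<Sum>i<n. c i * a i m)"
    using assms(6) unfolding P_alpha_def by blast
  obtain k :: nat and d :: "nat \<Rightarrow> complex" and b :: "nat \<Rightarrow> 'm \<Rightarrow> complex" where gb: "\<forall>j<k. alpha_proper_elt \<mu> act (b j)" and ge: "g = (\<lambda>m. \<Sum>j<k. d j * b j m)"
    using assms(7) unfolding P_alpha_def by blast
  have areal: "cnj (a i m) = a i m" if "i < n" for i m
    using fa that unfolding alpha_proper_elt_def by (metis Reals_cnj_iff)
  have eq: "(\<lambda>m. cnj (f m) * g m) = (\<lambda>m. \<Sum>i<n. \<Sum>j<k. (cnj (c i) * d j) * (a i m * b j m))"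
  proof
    fix m
    have "cnj (f m) = (\<Sum>i<n. cnj (c i) * a i m)" unfolding fe using areal by simp
    then show "cnj (f m) * g m = (\<Sum>i<n. \<Sum>j<k. (cnj (c i) * d j) * (a i m * b j m))"
      unfolding ge by (simp add: sum_distrib_left sum_distrib_right algebra_simps)
  qed
  have "good \<mu> act (\<lambda>m. \<Sum>i<n. \<Sum>j<k. (cnj (c i) * d j) * (a i m * b j m))"
  proof (rule good_sum[OF lhm ca], intro allI impI)
    fix i assume i: "i < n"
    show "good \<mu> act (\<lambda>m. \<Sum>j<k. (cnj (c i) * d j) * (a i m * b j m))"
    proof (rule good_sum[OF lhm ca], intro allI impI)
      fix j assume j: "j < k"
      have "good \<mu> act (\<lambda>m. a i m * b j m)" using prod_good[OF lhm ca LC] fa gb i j by blast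
      then show "good \<mu> act (\<lambda>m. (cnj (c i) * d j) * (a i m * b j m))" by (rule good_scale[OF lhm ca])
    qed
  qed
  then have gd: "good \<mu> act (\<lambda>m. cnj (f m) * g m)" using eq by simp
  then obtain h where h: "h \<in> Cb" "strict_conv (\<lambda>l. p_lam \<mu> act l (\<lambda>m. cnj (f m) * g m)) h" "VI act h"
    and uC: "(\<lambda>m. cnj (f m) * g m) \<in> C0"
    unfolding good_def by blast
  have psi: "psi_alpha \<mu> act (\<lambda>m. cnj (f m) * g m) = h"
    unfolding psi_alpha_def
  proof (rule the_equality)
    show "h \<in> Cb \<and> strict_conv (\<lambda>l. p_lam \<mu> act l (\<lambda>m. cnj (f m) * g m)) h" using h by blast
  next
    fix h' assume "h' \<in> Cb \<and> strict_conv (\<lambda>l. p_lam \<mu> act l (\<lambda>m. cnj (f m) * g m)) h'"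
    then show "h' = h" using sc_unique[OF LC _ h(2)] by blast
  qed
  have inv0: "h (act (- y) m) = h m" for y m by (rule inv_limit[OF lhm ca LC uC h(2)])
  have inv: "\<forall>y m. h (act y m) = h m"
  proof (intro allI)
    fix y m show "h (act y m) = h m" using inv0[of "- y" m] by simp
  qed
  have ai: "alpha_invariant act h" unfolding alpha_invariant_def alpha_def using inv0 by simp
  have oc: "on_orbits h \<in> C0_on (orbit_space act)" by (rule orbit_C0[OF ca h(1) inv h(3)])
  show ?thesis unfolding psi using h ai oc by blast
qed


end
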